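(* Let $0<\mu\le L$, $G>0$, $\rho>0$, $n\ge1$, $T\ge1$, and let $\eta>0$ satisfy $\eta\le\frac{2}{\mu+L}-\frac{\mu+L}{2\mu L(\mu/(\rho L^2)+1)}$. Then $$\frac{2G^2(\mu+L)}{n\mu L(1+\mu\rho)}\left\{1-\left[1-(1+\mu\rho)\frac{\eta\mu L}{\mu+L}\right]^T\right\}\le\frac{2G^2(\mu+L)}{n\mu L}\left\{1-\left[1-\frac{\eta\mu L}{\mu+L}\right]^T\right\};$$ that is, for per-example losses that are $\mu$-strongly convex, $L$-smooth and $G$-Lipschitz, run with such a constant learning rate for $T$ steps, the uniform-stability generalization bound of SAM (left) is at most that of SGD (right).
   Context: The left side is the generalization-error bound for SAM (update $\boldsymbol{w}_{t+1}=\boldsymbol{w}_t-\eta\nabla f(\boldsymbol{w}_t+\rho\nabla f(\boldsymbol{w}_t,z),z)$ with a uniformly sampled example $z$ from an $n$-example training set), and the right side is the corresponding bound for SGD with the same learning rate. *)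

theory Defs
  imports Complex_Main
begin

end

theory Submission
  imports Defs
begin

lemma key_mono:
  fixes a c :: real and T :: nat
  assumes "a > 0" "c \<ge> 1" "c * a \<le> 1"
  shows "1 - (1 - c * a) ^ T \<le> c * (1 - (1 - a) ^ T)"
proof -
  have y0: "0 \<le> 1 - c * a" using assms by simp
  have yy: "1 - c * a \<le> 1 - a" using assms by (simp add: mult_right_mono)
  have S: "(\<Sum>i<T. (1 - c * a) ^ i) \<le> (\<Sum>i<T. (1 - a) ^ i)"
    by (intro sum_mono power_mono y0 yy)
  have "1 - (1 - c * a) ^ T = (c * a) * (\<Sum>i<T. (1 - c * a) ^ i)"
    by (simp add: one_diff_power_eq)
  also have "\<dots> \<le> (c * a) * (\<Sum>i<T. (1 - a) ^ i)"
    using S assms by (intro mult_left_mono) auto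
  also have "\<dots> = c * (1 - (1 - a) ^ T)"
    by (simp add: one_diff_power_eq)
  finally show ?thesis .
qed

lemma cancel_aux:
  fixes s p r L m :: real assumes "s>0" "p>0" "m + r*L^2 > 0"
  shows "s * r * L^2 / (2 * p * (m + r * L^2)) * p / s = r * L^2 / (2 * (m + r * L^2))"
proof -
  have "s * r * L^2 / (2 * p * (m + r * L^2)) * p / s = (s * p) * (r * L^2) / ((s * p) * (2 * (m + r * L^2)))"
    by simp
  also have "\<dots> = r * L^2 / (2 * (m + r * L^2))"
    using assms by (intro nonzero_mult_divide_mult_cancel_left) simp
  finally show ?thesis .
qed

theorem corollary6:
  fixes \<mu> L G \<rho> \<eta> :: real and n T :: nat
  assumes "0 < \<mu>" and "\<mu> \<le> L" and "G > 0" and "\<rho> > 0"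
    and "n \<ge> 1" and "T \<ge> 1" and "\<eta> > 0"
    and "\<eta> \<le> 2 / (\<mu> + L) - (\<mu> + L) / (2 * \<mu> * L * (\<mu> / (\<rho> * L^2) + 1))"
  shows "2 * G^2 * (\<mu> + L) / (real n * \<mu> * L * (1 + \<mu> * \<rho>))
           * (1 - (1 - (1 + \<mu> * \<rho>) * (\<eta> * \<mu> * L / (\<mu> + L))) ^ T)
         \<le> 2 * G^2 * (\<mu> + L) / (real n * \<mu> * L)
           * (1 - (1 - \<eta> * \<mu> * L / (\<mu> + L)) ^ T)"
proof -
  define s where "s = \<mu> + L"
  define p where "p = \<mu> * L"
  define a where "a = \<eta> * \<mu> * L / (\<mu> + L)"
  define c where "c = 1 + \<mu> * \<rho>"
  define C where "C = 2 * G^2 * (\<mu> + L) / (real n * \<mu> * L)"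
  have L0: "L > 0" using assms by linarith
  have s0: "s > 0" and p0: "p > 0" using assms L0 by (auto simp: s_def p_def)
  have c1: "c \<ge> 1" using assms by (simp add: c_def)
  have a0: "a > 0" using assms L0 by (simp add: a_def)
  have C0: "C \<ge> 0" using assms L0 by (simp add: C_def)
  have e1: "(\<mu> + L) / (2 * \<mu> * L * (\<mu> / (\<rho> * L^2) + 1)) = s * \<rho> * L^2 / (2 * p * (\<mu> + \<rho> * L^2))"
    using assms L0 by (simp add: s_def p_def field_simps)
  have eta: "\<eta> \<le> 2 / s - s * \<rho> * L^2 / (2 * p * (\<mu> + \<rho> * L^2))"
    using assms(8) e1 by (simp add: s_def)
  have "a = \<eta> * p / s" by (simp add: a_def p_def s_def)
  also have "\<dots> \<le> (2 / s - s * \<rho> * L^2 / (2 * p * (\<mu> + \<rho> * L^2))) * p / s"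
    using eta s0 p0 by (simp add: divide_right_mono mult_right_mono)
  also have "\<dots> = 2 * p / s^2 - \<rho> * L^2 / (2 * (\<mu> + \<rho> * L^2))"
  proof -
    have D': "\<mu> + \<rho> * L^2 > 0" using assms by (simp add: add_pos_nonneg)
    have t1: "2 / s * p / s = 2 * p / s^2" by (simp add: power2_eq_square)
    have t2: "s * \<rho> * L^2 / (2 * p * (\<mu> + \<rho> * L^2)) * p / s = \<rho> * L^2 / (2 * (\<mu> + \<rho> * L^2))"
      using s0 p0 D' by (rule cancel_aux)
    show ?thesis using t1 t2 by (simp add: left_diff_distrib diff_divide_distrib)
  qed
  also have "\<dots> \<le> 1/2 - \<rho> * L^2 / (2 * (\<mu> + \<rho> * L^2))"
  proof -
    have sq: "s^2 - 4 * p = (\<mu> - L)^2" by (simp add: s_def p_def power2_eq_square algebra_simps)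
    have "4 * p \<le> s^2" using sq zero_le_power2[of "\<mu> - L"] by linarith
    moreover have "s^2 > 0" using s0 by simp
    ultimately have "2 * p / s^2 \<le> 1/2" by (simp add: pos_divide_le_eq)
    then show ?thesis by linarith
  qed
  also have "\<dots> = \<mu> / (2 * (\<mu> + \<rho> * L^2))"
  proof -
    have D': "\<mu> + \<rho> * L^2 > 0" using assms by (simp add: add_pos_nonneg)
    have h12: "1/2 = (\<mu> + \<rho> * L^2) / (2 * (\<mu> + \<rho> * L^2))" using D' by simp
    have "1/2 - \<rho> * L^2 / (2 * (\<mu> + \<rho> * L^2)) = ((\<mu> + \<rho> * L^2) - \<rho> * L^2) / (2 * (\<mu> + \<rho> * L^2))"
      by (simp only: diff_divide_distrib h12)
    then show ?thesis by simp
  qed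
  finally have aB: "a \<le> \<mu> / (2 * (\<mu> + \<rho> * L^2))" .
  have D: "\<mu> + \<rho> * L^2 > 0" using assms by (simp add: add_pos_nonneg)
  have "c * a \<le> c * (\<mu> / (2 * (\<mu> + \<rho> * L^2)))"
    using aB c1 by (intro mult_left_mono) auto
  also have "\<dots> \<le> 1"
  proof -
    have "\<mu>^2 \<le> L^2" using assms by (simp add: power_mono)
    then have "\<rho> * \<mu>^2 \<le> \<rho> * L^2" using assms by simp
    moreover have "(1 + \<mu> * \<rho>) * \<mu> = \<mu> + \<rho> * \<mu>^2" by (simp add: algebra_simps power2_eq_square)
    moreover have "\<rho> * L^2 \<ge> 0" using assms by simp
    ultimately have "(1 + \<mu> * \<rho>) * \<mu> \<le> 2 * (\<mu> + \<rho> * L^2)" using assms(1)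
      by (smt (verit))
    then have "c * \<mu> / (2 * (\<mu> + \<rho> * L^2)) \<le> 1" using D by (simp add: c_def pos_divide_le_eq)
    then show ?thesis by simp
  qed
  finally have ca: "c * a \<le> 1" .
  have K: "1 - (1 - c * a) ^ T \<le> c * (1 - (1 - a) ^ T)"
    using key_mono[OF a0 c1 ca] .
  have "C / c * (1 - (1 - c * a) ^ T) \<le> C / c * (c * (1 - (1 - a) ^ T))"
    using K C0 c1 by (intro mult_left_mono) auto
  also have "\<dots> = C * (1 - (1 - a) ^ T)" using c1 by simp
  finally have F: "C / c * (1 - (1 - c * a) ^ T) \<le> C * (1 - (1 - a) ^ T)" .
  have eqL: "2 * G^2 * (\<mu> + L) / (real n * \<mu> * L * (1 + \<mu> * \<rho>)) = C / c"
    by (simp add: C_def c_def)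
  show ?thesis using F unfolding eqL by (simp add: a_def c_def C_def)
qed

end
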